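(* For real $m>0$ let $\lambda_{1,m}=m^2+\gamma_{1,m}^2$, where $\gamma_{1,m}$ is the unique $\gamma\in\left(\frac{\pi}{2},\pi\right)$ with $\gamma\tan\gamma=-m\tanh m$. Then there exists $m^*\in(0,+\infty)$ such that $\lambda_{1,m^*}=\min_{m>0}\lambda_{1,m}$.
   Context: This concerns the rectangle case $\ell=1$: for integer $m\ge1$, $\lambda_{1,m}$ is an eigenvalue of $\Delta^2u=-\lambda\Delta u$ on $(0,\pi)\times(-1,1)$ with $u=0$ on the boundary, $u_y=0$ on $y=\pm1$, $u_{xx}=0$ on $x\in\{0,\pi\}$; here $m$ ranges over all positive reals. *)

theory Defs
  imports Complex_Main
begin

definition gamma1 :: "real \<Rightarrow> real" where
  "gamma1 m = (THE g. pi / 2 < g \<and> g < pi \<and> g * tan g = - m * tanh m)"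

definition lambda1 :: "real \<Rightarrow> real" where
  "lambda1 m = m\<^sup>2 + (gamma1 m)\<^sup>2"

end

theory Submission
  imports Defs "HOL-Analysis.Analysis"
begin

lemma cos_neg_mid: "pi/2 < g \<Longrightarrow> g < pi \<Longrightarrow> cos g < 0"
  by (rule cos_lt_zero_pi) auto

lemma gtan_mono:
  assumes "pi/2 < a" "a < b" "b < pi"
  shows "a * tan a < b * tan b"
proof -
  have cz: "cos x \<noteq> 0" if "a \<le> x" "x \<le> b" for x
    using cos_neg_mid[of x] that assms by auto
  have D: "DERIV (\<lambda>x. x * tan x) x :> tan x + x * inverse ((cos x)\<^sup>2)" if "a \<le> x" "x \<le> b" for x
    using cz[OF that] by (auto intro!: derivative_eq_intros)
  show ?thesis
  proof (rule DERIV_pos_imp_increasing_open[OF assms(2)])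
    fix x assume x: "a < x" "x < b"
    have c: "cos x \<noteq> 0" using cz x by auto
    have "tan x + x * inverse ((cos x)\<^sup>2) = (sin x * cos x + x) / (cos x)\<^sup>2"
      using c by (simp add: tan_def field_simps power2_eq_square)
    moreover have "sin x * cos x \<ge> -1"
    proof -
      have "\<bar>sin x * cos x\<bar> \<le> 1" using abs_sin_le_one[of x] abs_cos_le_one[of x]
        by (simp add: abs_mult mult_le_one)
      then show ?thesis by linarith
    qed
    moreover have "x > 1" using x assms pi_gt3 by linarith
    ultimately have pos: "tan x + x * inverse ((cos x)\<^sup>2) > 0" using c by simp
    have "a \<le> x" "x \<le> b" using x by auto
    from D[OF this] pos show "\<exists>y. DERIV (\<lambda>x. x * tan x) x :> y \<and> 0 < y" by blast
  next
    show "continuous_on {a..b} (\<lambda>x. x * tan x)"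
      by (rule continuous_at_imp_continuous_on) (auto intro: DERIV_isCont[OF D])
  qed
qed

definition FF :: "real \<Rightarrow> real \<Rightarrow> real" where
  "FF m g = g * sin g * cosh m + m * sinh m * cos g"

lemma FF_half: "FF m (pi/2) = pi/2 * cosh m"
  by (simp add: FF_def)

lemma root_iff:
  assumes "0 < m" "pi/2 < g" "g < pi"
  shows "FF m g = 0 \<longleftrightarrow> g * tan g = - m * tanh m"
proof -
  have c: "cos g \<noteq> 0" using cos_neg_mid[of g] assms by auto
  have ch: "cosh m \<noteq> 0" by (metis cosh_real_pos less_irrefl)
  show ?thesis using c ch
    by (simp add: FF_def tan_def tanh_def field_simps) (auto simp: algebra_simps)
qed

lemma gamma1_eq:
  assumes "0 < m" "pi/2 < g" "g < pi" "g * tan g = - m * tanh m"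
  shows "gamma1 m = g"
  unfolding gamma1_def
proof (rule the_equality)
  show "pi / 2 < g \<and> g < pi \<and> g * tan g = - m * tanh m" using assms by auto
next
  fix h assume h: "pi / 2 < h \<and> h < pi \<and> h * tan h = - m * tanh m"
  show "h = g"
  proof (cases h g rule: linorder_cases)
    case less then show ?thesis using gtan_mono[of h g] h assms by auto
  next
    case greater then show ?thesis using gtan_mono[of g h] h assms by auto
  qed auto
qed

lemma gamma1_ex:
  assumes "0 < m"
  shows "\<exists>g. pi/2 < g \<and> g < pi \<and> g * tan g = - m * tanh m"
proof -
  have "\<exists>x. pi/2 \<le> x \<and> x \<le> pi \<and> FF m x = 0"
  proof (rule IVT2')
    show "FF m pi \<le> 0" using assms by (simp add: FF_def)
    show "0 \<le> FF m (pi/2)" by (simp add: FF_def)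
    show "pi/2 \<le> pi" by simp
    show "continuous_on {pi/2..pi} (FF m)" unfolding FF_def by (intro continuous_intros)
  qed
  then obtain x where x: "pi/2 \<le> x" "x \<le> pi" "FF m x = 0" by blast
  have "x \<noteq> pi/2"
  proof
    assume "x = pi/2"
    hence "FF m x = pi/2 * cosh m" using FF_half[of m] by (simp only:)
    moreover have "pi/2 * cosh m > 0" by simp
    ultimately show False using x(3) by simp
  qed
  moreover have "x \<noteq> pi" using x(3) assms by (auto simp: FF_def)
  ultimately have "pi/2 < x" "x < pi" using x by auto
  then show ?thesis using root_iff[OF assms] x(3) by blast
qed

lemma gamma1_props:
  assumes "0 < m"
  shows "pi/2 < gamma1 m \<and> gamma1 m < pi \<and> FF m (gamma1 m) = 0"
proof -
  obtain g where g: "pi/2 < g" "g < pi" "g * tan g = - m * tanh m" using gamma1_ex[OF assms] by blast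
  have "gamma1 m = g" by (rule gamma1_eq[OF assms g])
  then show ?thesis using g root_iff[OF assms g(1,2)] by auto
qed

lemma tan_small: "tan (1/20::real) \<le> 40/799"
proof -
  have s: "sin (1/20::real) \<le> 1/20" by (rule sin_x_le_x) simp
  have s2: "sin (1/40::real) \<le> 1/40" by (rule sin_x_le_x) simp
  have s2': "0 \<le> sin (1/40::real)" by (rule sin_ge_zero) (use pi_gt3 in auto)
  have "cos (1/20::real) = 1 - 2 * sin (1/40) ^ 2" using cos_double_sin[of "1/40::real"] by simp
  moreover have "sin (1/40::real) ^ 2 \<le> (1/40)^2" using s2 s2' by (rule power_mono)
  moreover have "(1/40::real)^2 = 1/1600" by (simp add: power2_eq_square)
  ultimately have c: "cos (1/20::real) \<ge> 799/800" by simp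
  have s0: "0 \<le> sin (1/20::real)" by (rule sin_ge_zero) (use pi_gt3 in auto)
  have "tan (1/20::real) = sin (1/20) / cos (1/20)" by (simp add: tan_def)
  also have "\<dots> \<le> (1/20) / (799/800)"
    by (rule frac_le) (use s s0 c in auto)
  finally show ?thesis by simp
qed

lemma tanh_half: "tanh (1/2::real) > 320/799"
proof -
  define E where "E = exp (1::real)"
  have "exp (1/4::real) \<ge> 5/4" using exp_ge_add_one_self[of "1/4::real"] by simp
  hence "exp (1/4::real) ^ 4 \<ge> (5/4)^4" by (rule power_mono) simp
  moreover have "exp (1/4::real) ^ 4 = E" unfolding E_def
    using exp_of_nat_mult[of 4 "1/4::real"] by simp
  moreover have "(5/4::real)^4 = 625/256" by (simp add: eval_nat_numeral)
  ultimately have E: "E \<ge> 625/256" by simp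
  have "tanh (1/2::real) = (1 - exp (-1)) / (1 + exp (-1))" by (simp add: tanh_real_altdef)
  also have "exp (-1::real) = 1 / E" by (simp add: E_def exp_minus field_simps)
  finally have t0: "tanh (1/2::real) = (1 - 1/E) / (1 + 1/E)" .
  have Ep: "E > 0" using E by simp
  have a1: "1 - 1/E = (E-1)/E" and a2: "1 + 1/E = (E+1)/E" using Ep by (simp_all add: field_simps)
  have "(1 - 1/E) / (1 + 1/E) = (E - 1) / (E + 1)"
    unfolding a1 a2 using Ep by simp
  with t0 have t: "tanh (1/2::real) = (E - 1) / (E + 1)" by simp
  show ?thesis unfolding t using E by (simp add: field_simps)
qed

lemma gamma_half: "gamma1 (1/2) < pi - 1/20"
proof (rule ccontr)
  define g where "g = gamma1 (1/2)"
  assume "\<not> gamma1 (1/2) < pi - 1/20"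
  hence ge: "g \<ge> pi - 1/20" by (simp add: g_def)
  have gp: "pi/2 < g" "g < pi" "FF (1/2) g = 0" using gamma1_props[of "1/2"] by (auto simp: g_def)
  hence eq: "g * tan g = - (1/2) * tanh (1/2)" using root_iff[of "1/2" g] by simp
  have "(pi - 1/20) * tan (pi - 1/20) \<le> g * tan g"
  proof (cases "g = pi - 1/20")
    case False
    then show ?thesis using gtan_mono[of "pi - 1/20" g] ge gp pi_gt3 by auto
  qed simp
  moreover have "tan (pi - 1/20) = - tan (1/20::real)" by (simp add: tan_def)
  ultimately have "(1/2) * tanh (1/2::real) \<le> (pi - 1/20) * tan (1/20)" using eq by simp
  also have "\<dots> \<le> 4 * (40/799)"
  proof (rule mult_mono)
    show "pi - 1/20 \<le> 4" using pi_less_4 by simp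
    show "tan (1/20::real) \<le> 40/799" by (rule tan_small)
    show "0 \<le> tan (1/20::real)" by (rule less_imp_le, rule tan_gt_zero) (use pi_gt3 in auto)
  qed simp
  finally show False using tanh_half by simp
qed

theorem theorem5p3:
  shows "\<exists>ms::real. 0 < ms \<and> (\<forall>m::real. 0 < m \<longrightarrow> lambda1 ms \<le> lambda1 m)"
proof -
  define S where "S = ({0..pi} \<times> {pi/2..pi}) \<inter> {p::real\<times>real. FF (fst p) (snd p) = 0}"
  define V where "V = (\<lambda>p::real\<times>real. (fst p)\<^sup>2 + (snd p)\<^sup>2)"
  have cS: "compact S" unfolding S_def
    by (intro compact_Int_closed compact_Times compact_Icc closed_Collect_eq)
       (auto simp: FF_def intro!: continuous_intros)
  have ne: "(0, pi) \<in> S" by (simp add: S_def FF_def)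
  have cV: "continuous_on S V" unfolding V_def by (intro continuous_intros)
  obtain p where pS: "p \<in> S" and pmin: "\<And>q. q \<in> S \<Longrightarrow> V p \<le> V q"
    using continuous_attains_inf[OF cS _ cV] ne by blast
  obtain ms gs where p: "p = (ms, gs)" by (cases p)
  have mem: "(m, gamma1 m) \<in> S" if "0 < m" "m \<le> pi" for m
    using gamma1_props[OF that(1)] that by (auto simp: S_def)
  have "V (1/2, gamma1 (1/2)) < pi\<^sup>2"
  proof -
    have g: "pi/2 < gamma1 (1/2)" "gamma1 (1/2) < pi - 1/20"
      using gamma1_props[of "1/2"] gamma_half by auto
    have "(gamma1 (1/2))\<^sup>2 \<le> (pi - 1/20)\<^sup>2"
      using g pi_gt3 by (intro power_mono) auto
    thus ?thesis using pi_gt3 by (simp add: V_def power2_eq_square algebra_simps)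
  qed
  moreover have "(1/2, gamma1 (1/2)) \<in> S" using mem pi_gt3 by simp
  ultimately have Vp: "V p < pi\<^sup>2" using pmin by fastforce
  have ranges: "0 \<le> ms" "ms \<le> pi" "pi/2 \<le> gs" "gs \<le> pi" "FF ms gs = 0"
    using pS by (auto simp: S_def p)
  have ms0: "ms \<noteq> 0"
  proof
    assume "ms = 0"
    hence "gs * sin gs = 0" using ranges by (simp add: FF_def)
    moreover have "gs > 0" using ranges pi_gt3 by simp
    ultimately have "sin gs = 0" by simp
    hence "gs = pi" using sin_gt_zero[of gs] ranges pi_gt3 by (cases "gs < pi") auto
    thus False using Vp \<open>ms = 0\<close> by (simp add: V_def p)
  qed
  hence msp: "0 < ms" using ranges by simp
  have "gs \<noteq> pi/2"
  proof
    assume "gs = pi/2"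
    hence "FF ms gs = pi/2 * cosh ms" using FF_half[of ms] by (simp only:)
    moreover have "pi/2 * cosh ms > 0" by simp
    ultimately show False using ranges by simp
  qed
  moreover have "gs \<noteq> pi" using ranges msp by (auto simp: FF_def)
  ultimately have gsr: "pi/2 < gs" "gs < pi" using ranges by auto
  have gseq: "gamma1 ms = gs"
    using gamma1_eq[OF msp gsr] root_iff[OF msp gsr] ranges by simp
  have lp: "lambda1 ms = V p" by (simp add: lambda1_def V_def p gseq)
  show ?thesis
  proof (intro exI conjI allI impI)
    show "0 < ms" by (rule msp)
    fix m :: real assume m: "0 < m"
    show "lambda1 ms \<le> lambda1 m"
    proof (cases "m \<le> pi")
      case True
      then show ?thesis using pmin[OF mem[OF m True]] lp by (simp add: V_def lambda1_def)
    next
      case False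
      hence "pi\<^sup>2 \<le> m\<^sup>2" using pi_gt3 by (intro power_mono) auto
      moreover have "lambda1 m \<ge> m\<^sup>2" by (simp add: lambda1_def)
      ultimately show ?thesis using lp Vp by linarith
    qed
  qed
qed

end
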